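(* Let $\mathbf{M}$ be a nonsingular $D\times D$ integer matrix and $\bm{\Gamma}_1,\dots,\bm{\Gamma}_L$ ($L\ge2$) nonsingular $D\times D$ integer matrices that are pairwise commutative and coprime; set $\mathbf{M}_i=\mathbf{M}\bm{\Gamma}_i$. Let $\mathbf{U}\mathbf{M}\mathbf{V}=\bm{\Lambda}$ be a Smith normal form decomposition ($\mathbf{U},\mathbf{V}$ unimodular, $\bm{\Lambda}$ diagonal). Fix unimodular $\mathbf{U}_1$ and let $\mathbf{m}\in\mathcal{A}_1$ with remainders $\mathbf{r}_i=\langle\mathbf{m}\rangle_{\mathbf{M}_i}$ and folding vectors $\mathbf{n}_i$ ($\mathbf{m}=\mathbf{M}_i\mathbf{n}_i+\mathbf{r}_i$). Let $\widetilde{\mathbf{r}}_i=\mathbf{r}_i+\triangle\mathbf{r}_i\in\mathbb{Z}^D$ be erroneous remainders and let $\widetilde{\mathbf{n}}_1,\dots,\widetilde{\mathbf{n}}_L$ be the output of Algorithm 2. Define $\bm{\vartheta}_i=Q_{\bm{\Lambda}}(\mathbf{U}(\triangle\mathbf{r}_i-\triangle\mathbf{r}_1))$, $2\le i\le L$. Then $\widetilde{\mathbf{n}}_i=\mathbf{n}_i$ for all $i$ if and only if $\bm{\vartheta}_i=\mathbf{0}$ for all $2\le i\le L$. Moreover: (1) if $\lVert\mathbf{U}(\triangle\mathbf{r}_i-\triangle\mathbf{r}_1)\rVert<\lambda_{\mathrm{LAT}(\bm{\Lambda})}/2$ for all $2\le i\le L$, then all $\bm{\vartheta}_i=\mathbf{0}$;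 (2) if $\lVert\triangle\mathbf{r}_i\rVert\le\tau$ for all $i$ and $\tau<\lambda_{\mathrm{LAT}(\bm{\Lambda})}/(4\lVert\mathbf{U}\rVert_* )$, then all $\bm{\vartheta}_i=\mathbf{0}$. When the folding vectors are correctly determined, $\widetilde{\mathbf{m}}=\frac1L\sum_{i=1}^L(\mathbf{M}_i\mathbf{n}_i+\widetilde{\mathbf{r}}_i)$ satisfies $\lVert\widetilde{\mathbf{m}}-\mathbf{m}\rVert\le\tau$ whenever $\lVert\triangle\mathbf{r}_i\rVert\le\tau$ for all $i$.
   Context: All matrices are $D\times D$; unimodular means integer with determinant $\pm1$; commuting nonsingular integer matrices are coprime if all their common left (equivalently right) divisors are unimodular. $\mathrm{LAT}(\mathbf{A})=\{\mathbf{A}\mathbf{n}:\mathbf{n}\in\mathbb{Z}^D\}$. $\mathcal{N}(\mathbf{A})=\{\mathbf{k}\in\mathbb{Z}^D:\mathbf{k}=\mathbf{A}\mathbf{x},\ \mathbf{x}\in[0,1)^D\}$; $\langle\mathbf{m}\rangle_{\mathbf{A}}$ is the unique $\mathbf{r}\in\mathcal{N}(\mathbf{A})$ with $\mathbf{m}-\mathbf{r}\in\mathrm{LAT}(\mathbf{A})$; $\mathbf{x}\equiv\mathbf{y}\bmod\mathbf{A}$ means $\mathbf{x}-\mathbf{y}\in\mathrm{LAT}(\mathbf{A})$. $\mathcal{A}_1=\{\mathbf{m}\in\mathbb{Z}^D:\lfloor\mathbf{M}_1^{-1}\mathbf{m}\rfloor\in\mathcal{N}(\bm{\Gamma}_2\cdots\bm{\Gamma}_L\mathbf{U}_1)\}$.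 $\lVert\cdot\rVert$ is a fixed norm on $\mathbb{R}^D$, $\lVert\mathbf{U}\rVert_*=\sup_{\lVert\mathbf{x}\rVert=1}\lVert\mathbf{U}\mathbf{x}\rVert$, and $\lambda_{\mathrm{LAT}(\bm{\Lambda})}=\min\{\lVert\mathbf{v}\rVert:\mathbf{v}\in\mathrm{LAT}(\bm{\Lambda})\setminus\{\mathbf{0}\}\}$. $Q_{\bm{\Lambda}}:\mathbb{R}^D\to\mathrm{LAT}(\bm{\Lambda})$ is a fixed closest-lattice-point map ($Q_{\bm{\Lambda}}(\mathbf{w})\in\arg\min_{\mathbf{p}\in\mathrm{LAT}(\bm{\Lambda})}\lVert\mathbf{p}-\mathbf{w}\rVert$) with $Q_{\bm{\Lambda}}(\mathbf{w}+\mathbf{l})=Q_{\bm{\Lambda}}(\mathbf{w})+\mathbf{l}$ for $\mathbf{l}\in\mathrm{LAT}(\bm{\Lambda})$. Algorithm 2: (i) $\mathbf{p}_i=Q_{\bm{\Lambda}}(\mathbf{U}(\widetilde{\mathbf{r}}_i-\widetilde{\mathbf{r}}_1))$, $2\le i\le L$; (ii) $\bm{\varpi}_i=\langle\bm{\Lambda}^{-1}\mathbf{p}_i\rangle_{\mathbf{V}^{-1}\bm{\Gamma}_i}$; (iii) $\bm{\psi}_1$ is the unique element of $\mathcal{N}(\mathbf{V}^{-1}\bm{\Gamma}_1\bm{\Gamma}_2\cdots\bm{\Gamma}_L\mathbf{U}_1)$ with $\bm{\psi}_1\equiv\mathbf{0}\bmod\mathbf{V}^{-1}\bm{\Gamma}_1$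 and $\bm{\psi}_1\equiv\bm{\varpi}_i\bmod\mathbf{V}^{-1}\bm{\Gamma}_i$ for $2\le i\le L$; (iv) $\widetilde{\mathbf{n}}_1=\bm{\Gamma}_1^{-1}\mathbf{V}\bm{\psi}_1$ and $\widetilde{\mathbf{n}}_i=\bm{\Gamma}_i^{-1}\mathbf{V}(\bm{\psi}_1-\bm{\Lambda}^{-1}\mathbf{p}_i)$ for $2\le i\le L$. *)

theory Defs
  imports "HOL-Analysis.Analysis"
begin

text \<open>Dimension D is the cardinality of the finite index type 'n.
  Integer vectors/matrices are real vectors/matrices with integral entries.\<close>

definition int_vec :: "real^'n \<Rightarrow> bool" where
  "int_vec x \<longleftrightarrow> (\<forall>j. x$j \<in> \<int>)"

definition int_mat :: "real^'n^'n \<Rightarrow> bool" where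
  "int_mat A \<longleftrightarrow> (\<forall>i j. A$i$j \<in> \<int>)"

definition nonsingular_int :: "real^'n^'n \<Rightarrow> bool" where
  "nonsingular_int A \<longleftrightarrow> int_mat A \<and> det A \<noteq> 0"

definition unimodular :: "real^'n^'n \<Rightarrow> bool" where
  "unimodular A \<longleftrightarrow> int_mat A \<and> (det A = 1 \<or> det A = -1)"

definition is_diag :: "real^'n^'n \<Rightarrow> bool" where
  "is_diag A \<longleftrightarrow> (\<forall>i j. i \<noteq> j \<longrightarrow> A$i$j = 0)"

definition left_divides :: "real^'n^'n \<Rightarrow> real^'n^'n \<Rightarrow> bool" where
  "left_divides D A \<longleftrightarrow> int_mat D \<and> (\<exists>X. int_mat X \<and> A = D ** X)"

definition coprime_mat :: "real^'n^'n \<Rightarrow> real^'n^'n \<Rightarrow> bool" where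
  "coprime_mat A B \<longleftrightarrow> (\<forall>D. left_divides D A \<and> left_divides D B \<longrightarrow> unimodular D)"

definition LAT :: "real^'n^'n \<Rightarrow> (real^'n) set" where
  "LAT A = {A *v k | k. int_vec k}"

definition NN :: "real^'n^'n \<Rightarrow> (real^'n) set" where
  "NN A = {k. int_vec k \<and> (\<exists>x. (\<forall>j. 0 \<le> x$j \<and> x$j < 1) \<and> k = A *v x)}"

definition rem :: "real^'n^'n \<Rightarrow> real^'n \<Rightarrow> real^'n" where
  "rem A m = (THE r. r \<in> NN A \<and> m - r \<in> LAT A)"

definition congmod :: "real^'n \<Rightarrow> real^'n \<Rightarrow> real^'n^'n \<Rightarrow> bool" where
  "congmod x y A \<longleftrightarrow> x - y \<in> LAT A"

definition vfloor :: "real^'n \<Rightarrow> real^'n" where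
  "vfloor x = (\<chi> j. of_int \<lfloor>x$j\<rfloor>)"

definition mprod :: "(nat \<Rightarrow> real^'n^'n) \<Rightarrow> nat \<Rightarrow> nat \<Rightarrow> real^'n^'n" where
  "mprod G a b = foldr (\<lambda>i P. G i ** P) [a..<Suc b] (mat 1)"

definition A1 :: "real^'n^'n \<Rightarrow> (nat \<Rightarrow> real^'n^'n) \<Rightarrow> nat \<Rightarrow> real^'n^'n \<Rightarrow> (real^'n) set" where
  "A1 M G L U1 = {m. int_vec m \<and>
      vfloor (matrix_inv (M ** G 1) *v m) \<in> NN (mprod G 2 L ** U1)}"

definition is_norm :: "(real^'n \<Rightarrow> real) \<Rightarrow> bool" where
  "is_norm nrm \<longleftrightarrow> (\<forall>x. nrm x = 0 \<longleftrightarrow> x = 0) \<and> (\<forall>c x. nrm (c *\<^sub>R x) = \<bar>c\<bar> * nrm x)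
     \<and> (\<forall>x y. nrm (x + y) \<le> nrm x + nrm y)"

definition opnorm :: "(real^'n \<Rightarrow> real) \<Rightarrow> real^'n^'n \<Rightarrow> real" where
  "opnorm nrm U = (SUP x\<in>{x. nrm x = 1}. nrm (U *v x))"

definition lat_min :: "(real^'n \<Rightarrow> real) \<Rightarrow> real^'n^'n \<Rightarrow> real" where
  "lat_min nrm A = Inf (nrm ` (LAT A - {0}))"

definition closest_point_map :: "(real^'n \<Rightarrow> real) \<Rightarrow> real^'n^'n \<Rightarrow> (real^'n \<Rightarrow> real^'n) \<Rightarrow> bool" where
  "closest_point_map nrm Lam Q \<longleftrightarrow>
     (\<forall>w. Q w \<in> LAT Lam \<and> (\<forall>p\<in>LAT Lam. nrm (Q w - w) \<le> nrm (p - w)))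
   \<and> (\<forall>w l. l \<in> LAT Lam \<longrightarrow> Q (w + l) = Q w + l)"

definition alg2 :: "(real^'n \<Rightarrow> real^'n) \<Rightarrow> real^'n^'n \<Rightarrow> real^'n^'n \<Rightarrow> real^'n^'n
    \<Rightarrow> (nat \<Rightarrow> real^'n^'n) \<Rightarrow> nat \<Rightarrow> real^'n^'n \<Rightarrow> (nat \<Rightarrow> real^'n) \<Rightarrow> nat \<Rightarrow> real^'n" where
  "alg2 Q U V Lam G L U1 rt =
    (let p = (\<lambda>i. Q (U *v (rt i - rt 1)));
         Vi = matrix_inv V;
         w = (\<lambda>i. rem (Vi ** G i) (matrix_inv Lam *v p i));
         psi = (THE psi. psi \<in> NN (Vi ** mprod G 1 L ** U1)
                   \<and> congmod psi 0 (Vi ** G 1)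
                   \<and> (\<forall>i\<in>{2..L}. congmod psi (w i) (Vi ** G i)))
     in (\<lambda>i. if i = 1 then matrix_inv (G 1) *v (V *v psi)
             else matrix_inv (G i) *v (V *v (psi - matrix_inv Lam *v p i))))"

end

theory Submission
  imports Defs
begin


lemma int_vec_add: "int_vec x \<Longrightarrow> int_vec y \<Longrightarrow> int_vec (x + y)"
  by (simp add: int_vec_def)
lemma int_vec_diff: "int_vec x \<Longrightarrow> int_vec y \<Longrightarrow> int_vec (x - y)"
  by (simp add: int_vec_def)
lemma int_vec_uminus: "int_vec x \<Longrightarrow> int_vec (- x)"
  by (simp add: int_vec_def)
lemma int_vec_0: "int_vec 0"
  by (simp add: int_vec_def)
lemma int_vec_scale: "c \<in> \<int> \<Longrightarrow> int_vec x \<Longrightarrow> int_vec (c *\<^sub>R x)"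
  by (simp add: int_vec_def)
lemma int_vec_mult: "int_mat A \<Longrightarrow> int_vec x \<Longrightarrow> int_vec (A *v x)"
  unfolding int_vec_def int_mat_def matrix_vector_mult_def
  by (auto intro!: Ints_sum Ints_mult)
lemma int_mat_mult: "int_mat A \<Longrightarrow> int_mat B \<Longrightarrow> int_mat (A ** B)"
  unfolding int_mat_def matrix_matrix_mult_def
  by (auto intro!: Ints_sum Ints_mult)
lemma int_mat_1: "int_mat (mat 1)"
  unfolding int_mat_def mat_def by auto
lemma int_vec_axis: "int_vec (axis k 1)"
  unfolding int_vec_def axis_def by auto

lemma det_int: "int_mat A \<Longrightarrow> det A \<in> \<int>"
  unfolding det_def int_mat_def
  by (auto intro!: Ints_sum Ints_mult Ints_prod simp: sign_def)

lemma inv_props: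
  fixes A :: "real^'n^'n"
  assumes "det A \<noteq> 0"
  shows "A ** matrix_inv A = mat 1" "matrix_inv A ** A = mat 1"
proof -
  have "invertible A" using assms invertible_det_nz by blast
  then have "\<exists>A'. A ** A' = mat 1 \<and> A' ** A = mat 1" unfolding invertible_def by blast
  from someI_ex[OF this] show "A ** matrix_inv A = mat 1" "matrix_inv A ** A = mat 1"
    unfolding matrix_inv_def by auto
qed

lemma inv_vec:
  fixes A :: "real^'n^'n"
  assumes "det A \<noteq> 0"
  shows "A *v (matrix_inv A *v x) = x" "matrix_inv A *v (A *v x) = x"
  using inv_props[OF assms] by (simp_all add: matrix_vector_mul_assoc)

lemma mv_cancel:
  fixes A :: "real^'n^'n"
  assumes "det A \<noteq> 0" "A *v x = A *v y"
  shows "x = y"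
  by (metis assms inv_vec(2))

lemma det_inv_nz:
  fixes A :: "real^'n^'n"
  assumes "det A \<noteq> 0"
  shows "det (matrix_inv A) \<noteq> 0"
  using inv_props[OF assms] by (metis det_I det_mul mult_zero_right zero_neq_one)

lemma unimod_inv_vec:
  fixes A :: "real^'n^'n"
  assumes "unimodular A" "int_vec x"
  shows "int_vec (matrix_inv A *v x)"
proof -
  have d: "det A = 1 \<or> det A = -1" and iA: "int_mat A" using assms unfolding unimodular_def by auto
  then have d0: "det A \<noteq> 0" by auto
  let ?y = "matrix_inv A *v x"
  have "A *v ?y = x" using inv_vec[OF d0] by simp
  then have y: "?y = (\<chi> k. det(\<chi> i j. if j=k then x$i else A$i$j) / det A)"
    using cramer[OF d0] by blast
  show ?thesis unfolding int_vec_def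
  proof
    fix k
    have "det(\<chi> i j. if j=k then x$i else A$i$j) \<in> \<int>"
      using iA assms(2) by (intro det_int) (auto simp: int_mat_def int_vec_def)
    then show "?y $ k \<in> \<int>" using d by (subst y) auto
  qed
qed

lemma unimod_inv_mat:
  fixes A :: "real^'n^'n"
  assumes "unimodular A"
  shows "int_mat (matrix_inv A)"
  unfolding int_mat_def
proof (intro allI)
  fix i j
  have "int_vec (matrix_inv A *v axis j 1)" by (rule unimod_inv_vec[OF assms int_vec_axis])
  then show "matrix_inv A $ i $ j \<in> \<int>"
    by (simp add: int_vec_def matrix_vector_mult_basis column_def)
qed

lemma unimod_det: "unimodular A \<Longrightarrow> det A \<noteq> 0"
  unfolding unimodular_def by auto

lemma LAT_I: "int_vec k \<Longrightarrow> A *v k \<in> LAT A"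
  unfolding LAT_def by auto
lemma LAT_E: "x \<in> LAT A \<Longrightarrow> (\<And>k. int_vec k \<Longrightarrow> x = A *v k \<Longrightarrow> P) \<Longrightarrow> P"
  unfolding LAT_def by auto
lemma LAT_0: "0 \<in> LAT A"
  using LAT_I[OF int_vec_0] by simp
lemma LAT_add: "x \<in> LAT A \<Longrightarrow> y \<in> LAT A \<Longrightarrow> x + y \<in> LAT A"
  by (metis LAT_E LAT_I int_vec_add matrix_vector_right_distrib)
lemma LAT_diff: "x \<in> LAT A \<Longrightarrow> y \<in> LAT A \<Longrightarrow> x - y \<in> LAT A"
  by (metis LAT_E LAT_I int_vec_diff matrix_vector_mult_diff_distrib)
lemma LAT_int: "int_mat A \<Longrightarrow> x \<in> LAT A \<Longrightarrow> int_vec x"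
  by (metis LAT_E int_vec_mult)
lemma LAT_mat1: "int_vec x \<Longrightarrow> x \<in> LAT (mat 1)"
  by (metis LAT_I matrix_vector_mul_lid)
lemma LAT_mult: "int_mat A \<Longrightarrow> x \<in> LAT B \<Longrightarrow> A *v x \<in> LAT (A ** B)"
  by (metis LAT_E LAT_I matrix_vector_mul_assoc)



lemma finite_box:
  assumes "finite S"
  shows "finite {v::real^'n. \<forall>j. v$j \<in> S}"
proof -
  have "{v::real^'n. \<forall>j. v$j \<in> S} \<subseteq> (\<lambda>f. vec_lambda f) ` (PiE UNIV (\<lambda>_. S))"
  proof
    fix v :: "real^'n" assume "v \<in> {v. \<forall>j. v$j \<in> S}"
    then have "(\<lambda>j. v$j) \<in> PiE UNIV (\<lambda>_. S)" by auto
    moreover have "v = vec_lambda (\<lambda>j. v$j)" by simp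
    ultimately show "v \<in> (\<lambda>f. vec_lambda f) ` (PiE UNIV (\<lambda>_. S))" by blast
  qed
  moreover have "finite ((\<lambda>f. vec_lambda f) ` (PiE UNIV (\<lambda>_. S)))"
    using assms by (intro finite_imageI finite_PiE) auto
  ultimately show ?thesis by (rule finite_subset)
qed

lemma NN_finite:
  fixes A :: "real^'n^'n"
  shows "finite (NN A)"
proof -
  define B where "B = (\<Sum>i\<in>UNIV. \<Sum>j\<in>UNIV. \<bar>A$i$j\<bar>)"
  define S where "S = (of_int :: int \<Rightarrow> real) ` {-\<lceil>B\<rceil>..\<lceil>B\<rceil>}"
  have "NN A \<subseteq> {v::real^'n. \<forall>j. v$j \<in> S}"
  proof
    fix k assume k: "k \<in> NN A"
    then obtain x where x: "\<forall>j. 0 \<le> x$j \<and> x$j < 1" "k = A *v x" and ik: "int_vec k"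
      unfolding NN_def by auto
    show "k \<in> {v. \<forall>j. v$j \<in> S}"
    proof (intro CollectI allI)
      fix i
      have "\<bar>k$i\<bar> = \<bar>\<Sum>j\<in>UNIV. A$i$j * x$j\<bar>" using x by (simp add: matrix_vector_mult_def)
      also have "\<dots> \<le> (\<Sum>j\<in>UNIV. \<bar>A$i$j * x$j\<bar>)" by (rule sum_abs)
      also have "\<dots> \<le> (\<Sum>j\<in>UNIV. \<bar>A$i$j\<bar>)"
      proof (rule sum_mono)
        fix j
        have "\<bar>x$j\<bar> \<le> 1" using x(1)[rule_format, of j] by auto
        then show "\<bar>A$i$j * x$j\<bar> \<le> \<bar>A$i$j\<bar>"
          by (simp add: abs_mult mult_left_le)
      qed
      also have "\<dots> \<le> B" unfolding B_def
        by (rule member_le_sum[where f="\<lambda>i. \<Sum>j\<in>UNIV. \<bar>A$i$j\<bar>"]) (auto intro: sum_nonneg)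
      finally have kb: "\<bar>k$i\<bar> \<le> B" .
      from ik obtain z where z: "k$i = of_int z" unfolding int_vec_def by (metis Ints_cases)
      have "\<bar>z\<bar> \<le> \<lceil>B\<rceil>" using kb z by linarith
      then have "z \<in> {-\<lceil>B\<rceil>..\<lceil>B\<rceil>}" by auto
      then show "k$i \<in> S" unfolding S_def using z by (intro image_eqI[of _ _ z]) auto
    qed
  qed
  moreover have "finite {v::real^'n. \<forall>j. v$j \<in> S}" by (rule finite_box) (simp add: S_def)
  ultimately show ?thesis by (rule finite_subset)
qed

lemma int_in_unit: "(z::real) \<in> \<int> \<Longrightarrow> -1 < z \<Longrightarrow> z < 1 \<Longrightarrow> z = 0"
proof -
  assume "z \<in> \<int>" "-1 < z" "z < 1"
  then obtain k::int where "z = of_int k" by (metis Ints_cases)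
  with \<open>-1 < z\<close> \<open>z < 1\<close> have "-1 < k" "k < 1" by simp_all
  then have "k = 0" by simp
  then show "z = 0" using \<open>z = of_int k\<close> by simp
qed

lemma NN_unique:
  fixes A :: "real^'n^'n"
  assumes d: "det A \<noteq> 0" and r: "r \<in> NN A" and r': "r' \<in> NN A" and l: "r - r' \<in> LAT A"
  shows "r = r'"
proof -
  obtain x where x: "\<forall>j. 0 \<le> x$j \<and> x$j < 1" "r = A *v x" using r unfolding NN_def by auto
  obtain x' where x': "\<forall>j. 0 \<le> x'$j \<and> x'$j < 1" "r' = A *v x'" using r' unfolding NN_def by auto
  obtain k where k: "int_vec k" "r - r' = A *v k" using l by (auto elim: LAT_E)
  have "A *v (x - x') = A *v k" using x x' k by (simp add: matrix_vector_mult_diff_distrib)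
  then have "x - x' = k" by (rule mv_cancel[OF d])
  then have "k = 0"
  proof -
    assume e: "x - x' = k"
    have "k$j = 0" for j
    proof (rule int_in_unit)
      show "k$j \<in> \<int>" using k(1) unfolding int_vec_def by auto
      have "k$j = x$j - x'$j" using e by auto
      then show "-1 < k$j" "k$j < 1" using x(1)[rule_format, of j] x'(1)[rule_format, of j] by auto
    qed
    then show ?thesis by (simp add: vec_eq_iff)
  qed
  then show ?thesis using k by simp
qed

lemma rem_exists:
  fixes A :: "real^'n^'n"
  assumes iA: "int_mat A" and d: "det A \<noteq> 0" and m: "int_vec m"
  shows "\<exists>r. r \<in> NN A \<and> m - r \<in> LAT A"
proof -
  define x where "x = matrix_inv A *v m"
  define f where "f = x - vfloor x"
  have ifl: "int_vec (vfloor x)" unfolding int_vec_def vfloor_def by auto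
  have r: "A *v f = m - A *v vfloor x" unfolding f_def x_def
    by (simp add: matrix_vector_mult_diff_distrib inv_vec[OF d])
  have "A *v f \<in> NN A" unfolding NN_def
  proof (intro CollectI conjI exI)
    show "int_vec (A *v f)" unfolding r by (intro int_vec_diff m int_vec_mult iA ifl)
    show "\<forall>j. 0 \<le> f$j \<and> f$j < 1" unfolding f_def vfloor_def by auto linarith
  qed simp
  moreover have "m - A *v f \<in> LAT A" unfolding r using LAT_I[OF ifl] by simp
  ultimately show ?thesis by blast
qed

lemma rem_props:
  fixes A :: "real^'n^'n"
  assumes iA: "int_mat A" and d: "det A \<noteq> 0" and m: "int_vec m"
  shows "rem A m \<in> NN A" "m - rem A m \<in> LAT A"
proof -
  obtain r where r: "r \<in> NN A \<and> m - r \<in> LAT A" using rem_exists[OF assms] by blast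
  have "rem A m = r" unfolding rem_def
  proof (rule the_equality)
    show "r \<in> NN A \<and> m - r \<in> LAT A" by fact
    fix r' assume r': "r' \<in> NN A \<and> m - r' \<in> LAT A"
    have "r' - r = (m - r) - (m - r')" by simp
    then have "r' - r \<in> LAT A" using r r' LAT_diff by metis
    then show "r' = r" using NN_unique[OF d] r r' by blast
  qed
  then show "rem A m \<in> NN A" "m - rem A m \<in> LAT A" using r by auto
qed

lemma rem_eqI:
  fixes A :: "real^'n^'n"
  assumes iA: "int_mat A" and d: "det A \<noteq> 0" and m: "int_vec m"
    and r: "r \<in> NN A" "m - r \<in> LAT A"
  shows "rem A m = r"
proof -
  have "r - rem A m = (m - rem A m) - (m - r)" by simp
  then have "r - rem A m \<in> LAT A" using rem_props[OF assms(1-3)] r LAT_diff by metis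
  then show ?thesis using NN_unique[OF d] r rem_props[OF assms(1-3)] by metis
qed

lemma NN_0: "0 \<in> NN A"
  unfolding NN_def by (auto simp: int_vec_0 intro!: exI[of _ 0])

lemma NN_int: "r \<in> NN A \<Longrightarrow> int_vec r"
  unfolding NN_def by auto



definition sumcond :: "real^'n^'n \<Rightarrow> real^'n^'n \<Rightarrow> bool" where
  "sumcond A B \<longleftrightarrow> (\<forall>z. int_vec z \<longrightarrow> (\<exists>u v. int_vec u \<and> int_vec v \<and> z = A *v u + B *v v))"

lemma mv_uminus: "(B::real^'n^'n) *v (- v) = - (B *v v)"
  by (simp add: vec_eq_iff matrix_vector_mult_def sum_negf)

lemma LAT_comm:
  fixes A B :: "real^'n^'n"
  assumes iA: "int_mat A" and comm: "A ** B = B ** A" and x: "x \<in> LAT B"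
  shows "A *v x \<in> LAT B"
proof -
  obtain k where k: "int_vec k" "x = B *v k" using x by (auto elim: LAT_E)
  have "A *v x = B *v (A *v k)" using comm k by (simp add: matrix_vector_mul_assoc)
  then show ?thesis by (simp only:) (rule LAT_I[OF int_vec_mult[OF iA k(1)]])
qed

lemma mod_inj:
  fixes A B :: "real^'n^'n"
  assumes iA: "int_mat A" and iB: "int_mat B" and dB: "det B \<noteq> 0"
    and comm: "A ** B = B ** A" and sc: "sumcond A B"
    and a: "int_vec a" and Aa: "A *v a \<in> LAT B"
  shows "a \<in> LAT B"
proof -
  define f where "f r = rem B (A *v r)" for r
  have cong: "A *v u - A *v (rem B u) \<in> LAT B" if u: "int_vec u" for u
  proof -
    have "u - rem B u \<in> LAT B" using rem_props[OF iB dB u] by simp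
    then have "A *v (u - rem B u) \<in> LAT B" by (rule LAT_comm[OF iA comm])
    then show ?thesis by (simp add: matrix_vector_mult_diff_distrib)
  qed
  have fmap: "f ` NN B \<subseteq> NN B"
  proof (rule image_subsetI)
    fix r assume r: "r \<in> NN B"
    show "f r \<in> NN B" unfolding f_def by (rule rem_props(1)[OF iB dB int_vec_mult[OF iA NN_int[OF r]]])
  qed
  have surj: "NN B \<subseteq> f ` NN B"
  proof
    fix s assume s: "s \<in> NN B"
    then have "int_vec s" by (rule NN_int)
    then obtain u v where uv: "int_vec u" "int_vec v" "s = A *v u + B *v v"
      using sc unfolding sumcond_def by blast
    define r where "r = rem B u"
    have rN: "r \<in> NN B" unfolding r_def using rem_props[OF iB dB uv(1)] by simp
    have "A *v u - s = B *v (- v)" using uv(3) by (simp add: mv_uminus)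
    then have l1: "A *v u - s \<in> LAT B" by (simp only:) (rule LAT_I[OF int_vec_uminus[OF uv(2)]])
    have c: "A *v u - A *v r \<in> LAT B" using cong[OF uv(1)] unfolding r_def .
    have eq: "A *v r - s = (A *v u - s) - (A *v u - A *v r)" by simp
    have Ars: "A *v r - s \<in> LAT B" unfolding eq by (rule LAT_diff[OF l1 c])
    have "rem B (A *v r) = s"
      by (rule rem_eqI[OF iB dB int_vec_mult[OF iA NN_int[OF rN]] s Ars])
    then show "s \<in> f ` NN B" unfolding f_def using rN by blast
  qed
  have img: "f ` NN B = NN B" using fmap surj by (rule subset_antisym)
  have inj: "inj_on f (NN B)"
    by (rule eq_card_imp_inj_on[OF NN_finite]) (simp add: img)
  define r where "r = rem B a"
  have rN: "r \<in> NN B" unfolding r_def using rem_props[OF iB dB a] by simp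
  have c: "A *v a - A *v r \<in> LAT B" using cong[OF a] unfolding r_def .
  have eq: "A *v r = A *v a - (A *v a - A *v r)" by simp
  have Ar: "A *v r \<in> LAT B" by (subst eq) (rule LAT_diff[OF Aa c])
  have f0: "f 0 = 0" unfolding f_def
    by (rule rem_eqI[OF iB dB]) (auto simp: int_vec_0 NN_0 LAT_0)
  have fr: "f r = 0" unfolding f_def
    by (rule rem_eqI[OF iB dB int_vec_mult[OF iA NN_int[OF rN]] NN_0]) (simp add: Ar)
  have "r = 0" by (rule inj_onD[OF inj]) (simp_all only: f0 fr rN NN_0)
  moreover have "a - r \<in> LAT B" using rem_props(2)[OF iB dB a] unfolding r_def .
  ultimately show ?thesis by (simp only: diff_zero)
qed

lemma inter_prod:
  fixes A B :: "real^'n^'n"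
  assumes iA: "int_mat A" and dA: "det A \<noteq> 0" and iB: "int_mat B" and dB: "det B \<noteq> 0"
    and comm: "A ** B = B ** A" and sc: "sumcond A B"
    and yA: "y \<in> LAT A" and yB: "y \<in> LAT B"
  shows "y \<in> LAT (A ** B)"
proof -
  obtain a where a: "int_vec a" "y = A *v a" using yA by (auto elim: LAT_E)
  have "a \<in> LAT B" using mod_inj[OF iA iB dB comm sc a(1)] yB a(2) by simp
  then show ?thesis using a LAT_mult[OF iA] by simp
qed

lemma sumcond_prod:
  fixes G G1 P :: "real^'n^'n"
  assumes s1: "sumcond G G1" and s2: "sumcond G P" and comm: "G ** G1 = G1 ** G"
    and iG1: "int_mat G1"
  shows "sumcond G (G1 ** P)"
  unfolding sumcond_def
proof (intro allI impI)
  fix z :: "real^'n" assume z: "int_vec z"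
  obtain u v where uv: "int_vec u" "int_vec v" "z = G *v u + G1 *v v"
    using s1 z unfolding sumcond_def by blast
  obtain u' v' where uv': "int_vec u'" "int_vec v'" "v = G *v u' + P *v v'"
    using s2 uv(2) unfolding sumcond_def by blast
  have "z = G *v (u + G1 *v u') + (G1 ** P) *v v'"
    using uv(3) uv'(3) comm
    by (simp add: matrix_vector_right_distrib matrix_vector_mul_assoc add.assoc)
  then show "\<exists>u v. int_vec u \<and> int_vec v \<and> z = G *v u + (G1 ** P) *v v"
    using uv(1) uv'(1,2) int_vec_add[OF uv(1) int_vec_mult[OF iG1 uv'(1)]] by blast
qed

lemma sumcond_1: "sumcond (G::real^'n^'n) (mat 1)"
  unfolding sumcond_def
proof (intro allI impI)
  fix z :: "real^'n" assume "int_vec z"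
  then show "\<exists>u v. int_vec u \<and> int_vec v \<and> z = G *v u + mat 1 *v v"
    by (intro exI[of _ 0] exI[of _ z]) (simp add: int_vec_0)
qed



definition zgroup :: "(real^'n) set \<Rightarrow> bool" where
  "zgroup T \<longleftrightarrow> 0 \<in> T \<and> (\<forall>x\<in>T. \<forall>y\<in>T. x + y \<in> T) \<and> (\<forall>x\<in>T. -x \<in> T)"

lemma zgroup_0: "zgroup T \<Longrightarrow> 0 \<in> T" unfolding zgroup_def by blast
lemma zgroup_add: "zgroup T \<Longrightarrow> x \<in> T \<Longrightarrow> y \<in> T \<Longrightarrow> x + y \<in> T" unfolding zgroup_def by blast
lemma zgroup_uminus: "zgroup T \<Longrightarrow> x \<in> T \<Longrightarrow> -x \<in> T" unfolding zgroup_def by blast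
lemma zgroup_diff: "zgroup T \<Longrightarrow> x \<in> T \<Longrightarrow> y \<in> T \<Longrightarrow> x - y \<in> T"
  using zgroup_add[of T x "-y"] zgroup_uminus[of T y] by simp

lemma zgroup_nat_scale: "zgroup T \<Longrightarrow> x \<in> T \<Longrightarrow> of_nat n *\<^sub>R x \<in> T"
proof (induction n)
  case 0 then show ?case using zgroup_0 by simp
next
  case (Suc n)
  have "of_nat (Suc n) *\<^sub>R x = x + of_nat n *\<^sub>R x" by (simp add: algebra_simps)
  then show ?case using Suc zgroup_add by metis
qed

lemma zgroup_int_scale:
  assumes "zgroup T" "x \<in> T" "c \<in> \<int>"
  shows "c *\<^sub>R x \<in> T"
proof -
  obtain z where z: "c = of_int z" using assms(3) by (metis Ints_cases)
  show ?thesis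
  proof (cases "z \<ge> 0")
    case True
    then have "c = of_nat (nat z)" using z by simp
    then show ?thesis using zgroup_nat_scale[OF assms(1,2)] by simp
  next
    case False
    then have "c = - of_nat (nat (-z))" using z by simp
    then have "c *\<^sub>R x = - (of_nat (nat (-z)) *\<^sub>R x)" by simp
    then show ?thesis using zgroup_uminus[OF assms(1) zgroup_nat_scale[OF assms(1,2)]] by simp
  qed
qed

lemma zgroup_sum:
  assumes "zgroup T" "finite I" "\<forall>i\<in>I. f i \<in> T"
  shows "sum f I \<in> T"
  using assms(2,3)
proof (induction I rule: finite_induct)
  case empty then show ?case using zgroup_0[OF assms(1)] by simp
next
  case (insert i I) then show ?case using zgroup_add[OF assms(1)] by simp
qed

lemma zgroup_LAT:
  fixes D :: "real^'n^'n"
  assumes "zgroup T" "\<forall>b. column b D \<in> T" "int_vec x"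
  shows "D *v x \<in> T"
proof -
  have "D *v x = (\<Sum>i\<in>UNIV. x$i *\<^sub>R column i D)" by (simp add: matrix_mult_sum scalar_mult_eq_scaleR)
  also have "\<dots> \<in> T"
    using assms by (intro zgroup_sum) (auto intro!: zgroup_int_scale simp: int_vec_def)
  finally show ?thesis .
qed

lemma cols_divides:
  fixes D A :: "real^'n^'n"
  assumes iD: "int_mat D" and c: "\<forall>j. column j A \<in> LAT D"
  shows "left_divides D A"
proof -
  have "\<forall>j. \<exists>x. int_vec x \<and> column j A = D *v x" using c unfolding LAT_def by blast
  then obtain x where x: "\<forall>j. int_vec (x j) \<and> column j A = D *v x j" by metis
  define X where "X = (\<chi> i j. x j $ i)"
  have "int_mat X" unfolding X_def int_mat_def using x by (auto simp: int_vec_def)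
  moreover have "A = D ** X"
  proof -
    have "(D ** X)$i$j = A$i$j" for i j
    proof -
      have "(D ** X)$i$j = (D *v x j)$i"
        unfolding X_def by (simp add: matrix_matrix_mult_def matrix_vector_mult_def)
      also have "\<dots> = A$i$j" using x by (metis column_def vec_lambda_beta)
      finally show ?thesis .
    qed
    then show ?thesis by (simp add: vec_eq_iff)
  qed
  ultimately show ?thesis unfolding left_divides_def using iD by blast
qed

lemma pigeon_axis:
  fixes A :: "real^'n^'n"
  assumes iA: "int_mat A" and dA: "det A \<noteq> 0"
  shows "\<exists>j::nat. j > 0 \<and> of_nat j *\<^sub>R axis k 1 \<in> LAT A"
proof -
  define f where "f j = rem A (of_nat j *\<^sub>R axis k (1::real))" for j :: nat
  have iv: "int_vec (of_nat j *\<^sub>R axis k (1::real))" for j :: nat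
    by (rule int_vec_scale[OF _ int_vec_axis]) simp
  have "f ` UNIV \<subseteq> NN A" unfolding f_def using rem_props(1)[OF iA dA iv] by blast
  then have "\<not> inj f" using inj_on_finite[of f UNIV "NN A"] NN_finite by auto
  then obtain j1 j2 where j: "j1 \<noteq> j2" "f j1 = f j2" unfolding inj_def by blast
  have main: "of_nat (b - a) *\<^sub>R axis k 1 \<in> LAT A" if ab: "a < b" "f a = f b" for a b :: nat
  proof -
    have la: "of_nat a *\<^sub>R axis k 1 - f a \<in> LAT A" unfolding f_def by (rule rem_props(2)[OF iA dA iv])
    have lb: "of_nat b *\<^sub>R axis k 1 - f b \<in> LAT A" unfolding f_def by (rule rem_props(2)[OF iA dA iv])
    have "of_nat (b - a) *\<^sub>R axis k (1::real) =
       (of_nat b *\<^sub>R axis k 1 - f b) - (of_nat a *\<^sub>R axis k 1 - f a)"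
      using ab by (simp add: of_nat_diff scaleR_diff_left)
    then show ?thesis using LAT_diff[OF lb la] by simp
  qed
  show ?thesis
  proof (cases "j1 < j2")
    case True then show ?thesis using main[OF True j(2)] by (intro exI[of _ "j2 - j1"]) simp
  next
    case False then have "j2 < j1" using j(1) by simp
    then show ?thesis using main[of j2 j1] j(2) by (intro exI[of _ "j1 - j2"]) simp
  qed
qed



lemma lattice_from_group:
  fixes T :: "(real^'n) set" and k :: 'n
  assumes zg: "zgroup T" and Tint: "\<forall>t\<in>T. int_vec t" and ek: "axis k 1 \<notin> T"
    and dec: "\<forall>z. int_vec z \<longrightarrow> (\<exists>t c. t \<in> T \<and> c \<in> \<int> \<and> z = t + c *\<^sub>R axis k 1)"
    and jex: "\<exists>j::nat. j > 0 \<and> of_nat j *\<^sub>R axis k 1 \<in> T"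
  shows "\<exists>D. int_mat D \<and> T \<subseteq> LAT D \<and> (\<forall>b. column b D \<in> T)"
proof -
  define P where "P j \<longleftrightarrow> j > 0 \<and> of_nat j *\<^sub>R axis k (1::real) \<in> T" for j :: nat
  define q where "q = (LEAST j. P j)"
  have Pq: "P q" unfolding q_def by (rule LeastI_ex) (use jex P_def in blast)
  have qmin: "q \<le> j" if "P j" for j unfolding q_def by (rule Least_le) (fact that)
  have qe: "of_nat q *\<^sub>R axis k (1::real) \<in> T" and q0: "q > 0" using Pq P_def by auto
  have qdvd: "\<exists>s\<in>\<int>. \<mu> = of_nat q * s" if mu: "\<mu> \<in> \<int>" "\<mu> *\<^sub>R axis k 1 \<in> T" for \<mu>
  proof -
    obtain z where z: "\<mu> = of_int z" using mu(1) by (metis Ints_cases)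
    define d where "d = z div int q"
    define r where "r = z mod int q"
    have zdr: "z = int q * d + r" unfolding d_def r_def by simp
    have r0: "0 \<le> r" "r < int q" unfolding r_def using q0 by simp_all
    have "of_int r *\<^sub>R axis k (1::real) = \<mu> *\<^sub>R axis k 1 - of_int d *\<^sub>R (of_nat q *\<^sub>R axis k 1)"
      using z zdr by (simp add: algebra_simps)
    also have "\<dots> \<in> T" by (rule zgroup_diff[OF zg mu(2) zgroup_int_scale[OF zg qe]]) simp
    finally have rT: "of_int r *\<^sub>R axis k (1::real) \<in> T" .
    have "r = 0"
    proof (rule ccontr)
      assume "r \<noteq> 0"
      then have "P (nat r)" unfolding P_def using rT r0 by simp
      then have "q \<le> nat r" by (rule qmin)
      then show False using r0 by simp
    qed
    then show ?thesis using z zdr by (intro bexI[of _ "of_int d"]) simp_all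
  qed
  have "\<forall>i. \<exists>c. c \<in> \<int> \<and> axis i 1 - c *\<^sub>R axis k 1 \<in> T"
  proof
    fix i
    obtain t c where "t \<in> T" "c \<in> \<int>" "axis i 1 = t + c *\<^sub>R axis k 1"
      using dec int_vec_axis by blast
    then show "\<exists>c. c \<in> \<int> \<and> axis i 1 - c *\<^sub>R axis k 1 \<in> T" by (intro exI[of _ c]) simp
  qed
  then obtain c where c: "\<forall>i. c i \<in> \<int> \<and> axis i 1 - c i *\<^sub>R axis k 1 \<in> T" by metis
  define D :: "real^'n^'n" where "D = (\<chi> a b. if b = k then (if a = k then of_nat q else 0)
       else (if a = b then 1 else 0) - (if a = k then c b else 0))"
  have colD: "column b D = (if b = k then of_nat q *\<^sub>R axis k 1 else axis b 1 - c b *\<^sub>R axis k 1)" for b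
    unfolding D_def column_def by (simp add: vec_eq_iff axis_def)
  have colT: "\<forall>b. column b D \<in> T" using colD qe c by simp
  have iD: "int_mat D" unfolding D_def int_mat_def using c by auto
  have "T \<subseteq> LAT D"
  proof
    fix t assume tT: "t \<in> T"
    then have it: "int_vec t" using Tint by blast
    define W where "W = (\<Sum>b\<in>UNIV-{k}. t$b *\<^sub>R column b D)"
    define \<mu> where "\<mu> = t$k + (\<Sum>b\<in>UNIV-{k}. c b * t$b)"
    have W2: "W = (\<Sum>b\<in>UNIV-{k}. t$b *\<^sub>R axis b 1) - (\<Sum>b\<in>UNIV-{k}. c b * t$b) *\<^sub>R axis k 1"
    proof -
      have "W = (\<Sum>b\<in>UNIV-{k}. t$b *\<^sub>R axis b 1 - (c b * t$b) *\<^sub>R axis k 1)"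
        unfolding W_def by (rule sum.cong) (auto simp: colD algebra_simps)
      also have "\<dots> = (\<Sum>b\<in>UNIV-{k}. t$b *\<^sub>R axis b 1) - (\<Sum>b\<in>UNIV-{k}. c b * t$b) *\<^sub>R axis k 1"
        by (simp add: sum_subtractf scaleR_sum_left)
      finally show ?thesis .
    qed
    have texp: "t = t$k *\<^sub>R axis k 1 + (\<Sum>b\<in>UNIV-{k}. t$b *\<^sub>R axis b 1)"
    proof -
      have "t = (\<Sum>b\<in>UNIV. t$b *\<^sub>R axis b 1)" using basis_expansion[of t] by (simp add: scalar_mult_eq_scaleR)
      also have "\<dots> = t$k *\<^sub>R axis k 1 + (\<Sum>b\<in>UNIV-{k}. t$b *\<^sub>R axis b 1)"
        by (rule sum.remove) simp_all
      finally show ?thesis .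
    qed
    have I1: "t - W = \<mu> *\<^sub>R axis k 1"
      unfolding W2 \<mu>_def by (subst (1) texp) (simp add: algebra_simps)
    have WT: "W \<in> T" unfolding W_def
      using it colT by (intro zgroup_sum[OF zg]) (auto intro!: zgroup_int_scale[OF zg] simp: int_vec_def)
    have muT: "\<mu> *\<^sub>R axis k 1 \<in> T" using zgroup_diff[OF zg tT WT] I1 by simp
    have muZ: "\<mu> \<in> \<int>" unfolding \<mu>_def using it c by (auto simp: int_vec_def intro!: Ints_sum Ints_mult)
    obtain s where s: "s \<in> \<int>" "\<mu> = of_nat q * s" using qdvd[OF muZ muT] by blast
    define x where "x = (\<chi> b. if b = k then s else t$b)"
    have ix: "int_vec x" unfolding x_def int_vec_def using s it by (auto simp: int_vec_def)
    have "D *v x = (\<Sum>b\<in>UNIV. x$b *\<^sub>R column b D)" by (simp add: matrix_mult_sum scalar_mult_eq_scaleR)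
    also have "\<dots> = x$k *\<^sub>R column k D + (\<Sum>b\<in>UNIV-{k}. x$b *\<^sub>R column b D)"
      by (rule sum.remove) simp_all
    also have "(\<Sum>b\<in>UNIV-{k}. x$b *\<^sub>R column b D) = W"
      unfolding W_def x_def by (rule sum.cong) auto
    also have "x$k *\<^sub>R column k D = \<mu> *\<^sub>R axis k 1"
      unfolding x_def using s by (simp add: colD)
    also have "\<mu> *\<^sub>R axis k 1 + W = t" using I1 by (simp add: algebra_simps)
    finally show "t \<in> LAT D" using LAT_I[OF ix] by metis
  qed
  then show ?thesis using iD colT by blast
qed



lemma coprime_sumcond:
  fixes A B :: "real^'n^'n"
  assumes iA: "int_mat A" and dA: "det A \<noteq> 0" and iB: "int_mat B" and cop: "coprime_mat A B"
  shows "sumcond A B"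
proof (rule ccontr)
  assume nsc: "\<not> sumcond A B"
  define S where "S = {A *v u + B *v v | u v. int_vec u \<and> int_vec v}"
  obtain z0 where z0: "int_vec z0" "z0 \<notin> S" using nsc unfolding sumcond_def S_def by blast
  have zS: "zgroup S" unfolding zgroup_def
  proof (intro conjI ballI)
    show "0 \<in> S" unfolding S_def using int_vec_0 by (intro CollectI exI[of _ 0]) simp
  next
    fix x y assume "x \<in> S" "y \<in> S"
    then obtain u v u' v' where "int_vec u" "int_vec v" "int_vec u'" "int_vec v'"
      "x = A *v u + B *v v" "y = A *v u' + B *v v'" unfolding S_def by blast
    then show "x + y \<in> S" unfolding S_def
      by (intro CollectI exI[of _ "u + u'"] exI[of _ "v + v'"])
        (simp add: int_vec_add matrix_vector_right_distrib algebra_simps)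
  next
    fix x assume "x \<in> S"
    then obtain u v where "int_vec u" "int_vec v" "x = A *v u + B *v v" unfolding S_def by blast
    then show "-x \<in> S" unfolding S_def
      by (intro CollectI exI[of _ "-u"] exI[of _ "-v"]) (simp add: int_vec_uminus mv_uminus)
  qed
  have Sint: "\<forall>s\<in>S. int_vec s" unfolding S_def using int_vec_add int_vec_mult iA iB by blast
  have LA: "LAT A \<subseteq> S"
  proof
    fix x assume "x \<in> LAT A"
    then obtain u where "int_vec u" "x = A *v u" by (auto elim: LAT_E)
    then show "x \<in> S" unfolding S_def using int_vec_0 by (intro CollectI exI[of _ u] exI[of _ 0]) simp
  qed
  have LB: "LAT B \<subseteq> S"
  proof
    fix x assume "x \<in> LAT B"
    then obtain v where "int_vec v" "x = B *v v" by (auto elim: LAT_E)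
    then show "x \<in> S" unfolding S_def using int_vec_0 by (intro CollectI exI[of _ 0] exI[of _ v]) simp
  qed
  define T where "T K = {s + w | s w. s \<in> S \<and> int_vec w \<and> (\<forall>j. j \<notin> K \<longrightarrow> w$j = 0)}" for K
  have zT: "zgroup (T K)" for K unfolding zgroup_def
  proof (intro conjI ballI)
    show "0 \<in> T K" unfolding T_def using zgroup_0[OF zS] int_vec_0 by (intro CollectI exI[of _ 0]) auto
  next
    fix x y assume "x \<in> T K" "y \<in> T K"
    then obtain s w s' w' where "s \<in> S" "int_vec w" "\<forall>j. j \<notin> K \<longrightarrow> w$j = 0"
      "s' \<in> S" "int_vec w'" "\<forall>j. j \<notin> K \<longrightarrow> w'$j = 0" "x = s + w" "y = s' + w'"
      unfolding T_def by blast
    then show "x + y \<in> T K" unfolding T_def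
      by (intro CollectI exI[of _ "s + s'"] exI[of _ "w + w'"])
        (simp add: int_vec_add zgroup_add[OF zS] algebra_simps)
  next
    fix x assume "x \<in> T K"
    then obtain s w where "s \<in> S" "int_vec w" "\<forall>j. j \<notin> K \<longrightarrow> w$j = 0" "x = s + w"
      unfolding T_def by blast
    then show "-x \<in> T K" unfolding T_def
      by (intro CollectI exI[of _ "-s"] exI[of _ "-w"]) (simp add: int_vec_uminus zgroup_uminus[OF zS])
  qed
  have Tint: "\<forall>t\<in>T K. int_vec t" for K unfolding T_def using Sint int_vec_add by blast
  have ST: "S \<subseteq> T K" for K
  proof
    fix s assume "s \<in> S"
    then show "s \<in> T K" unfolding T_def using int_vec_0 by (intro CollectI exI[of _ s] exI[of _ 0]) simp
  qed
  define F where "F = {K. \<exists>z. int_vec z \<and> z \<notin> T K}"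
  have T0: "T {} \<subseteq> S"
  proof
    fix x assume "x \<in> T {}"
    then obtain s w where "s \<in> S" "\<forall>j. w$j = 0" "x = s + w" unfolding T_def by blast
    then have "w = 0" "x = s + w" by (auto simp: vec_eq_iff)
    then show "x \<in> S" using \<open>s \<in> S\<close> by simp
  qed
  have "{} \<in> F" unfolding F_def using z0 T0 by blast
  moreover have "finite F" by (rule finite_subset[of _ UNIV]) simp_all
  ultimately obtain K where K: "K \<in> F" "\<forall>K'\<in>F. K \<subseteq> K' \<longrightarrow> K = K'"
    using finite_has_maximal[of F] by blast
  have TU: "int_vec z \<Longrightarrow> z \<in> T UNIV" for z
    unfolding T_def using zgroup_0[OF zS] by (intro CollectI exI[of _ 0] exI[of _ z]) simp
  have "K \<noteq> UNIV" using K(1) TU unfolding F_def by blast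
  then obtain k where k: "k \<notin> K" by blast
  have "insert k K \<notin> F" using K(2) k by blast
  then have allT: "int_vec z \<Longrightarrow> z \<in> T (insert k K)" for z unfolding F_def by blast
  have dec: "\<forall>z. int_vec z \<longrightarrow> (\<exists>t c. t \<in> T K \<and> c \<in> \<int> \<and> z = t + c *\<^sub>R axis k 1)"
  proof (intro allI impI)
    fix z :: "real^'n" assume "int_vec z"
    then obtain s w where sw: "s \<in> S" "int_vec w" "\<forall>j. j \<notin> insert k K \<longrightarrow> w$j = 0" "z = s + w"
      using allT unfolding T_def by blast
    define w' where "w' = w - (w$k) *\<^sub>R axis k 1"
    have "int_vec w'" unfolding w'_def using sw(2) by (auto simp: int_vec_def axis_def)
    moreover have "\<forall>j. j \<notin> K \<longrightarrow> w'$j = 0" unfolding w'_def using sw(3) by (auto simp: axis_def)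
    ultimately have "s + w' \<in> T K" unfolding T_def using sw(1) by blast
    moreover have "w$k \<in> \<int>" using sw(2) by (simp add: int_vec_def)
    moreover have "z = (s + w') + (w$k) *\<^sub>R axis k 1" unfolding w'_def using sw(4) by simp
    ultimately show "\<exists>t c. t \<in> T K \<and> c \<in> \<int> \<and> z = t + c *\<^sub>R axis k 1" by blast
  qed
  have ek: "axis k 1 \<notin> T K"
  proof
    assume ekT: "axis k 1 \<in> T K"
    have "int_vec z \<Longrightarrow> z \<in> T K" for z
    proof -
      assume "int_vec z"
      then obtain t c where "t \<in> T K" "c \<in> \<int>" "z = t + c *\<^sub>R axis k 1" using dec by blast
      then show "z \<in> T K" using zgroup_add[OF zT] zgroup_int_scale[OF zT ekT] by simp
    qed
    then show False using K(1) unfolding F_def by blast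
  qed
  have jex: "\<exists>j::nat. j > 0 \<and> of_nat j *\<^sub>R axis k 1 \<in> T K"
    using pigeon_axis[OF iA dA, of k] LA ST[of K] by blast
  obtain D where D: "int_mat D" "T K \<subseteq> LAT D" "\<forall>b. column b D \<in> T K"
    using lattice_from_group[OF zT Tint ek dec jex] by blast
  have colA: "column j A \<in> LAT D" for j
  proof -
    have "column j A = A *v axis j 1" by (simp add: matrix_vector_mult_basis)
    then have "column j A \<in> LAT A" using LAT_I[OF int_vec_axis] by metis
    then show ?thesis using LA ST D(2) by blast
  qed
  have colB: "column j B \<in> LAT D" for j
  proof -
    have "column j B = B *v axis j 1" by (simp add: matrix_vector_mult_basis)
    then have "column j B \<in> LAT B" using LAT_I[OF int_vec_axis] by metis
    then show ?thesis using LB ST D(2) by blast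
  qed
  have "unimodular D" using cop cols_divides[OF D(1)] colA colB unfolding coprime_mat_def by blast
  then have "int_vec (matrix_inv D *v axis k 1)" by (rule unimod_inv_vec[OF _ int_vec_axis])
  moreover have "D *v (matrix_inv D *v axis k 1) = axis k 1"
    by (rule inv_vec(1)[OF unimod_det[OF \<open>unimodular D\<close>]])
  ultimately have "axis k 1 \<in> T K" using zgroup_LAT[OF zT D(3)] by metis
  then show False using ek by blast
qed



lemma mprod_step: "a \<le> b \<Longrightarrow> mprod G a b = G a ** mprod G (Suc a) b"
proof -
  assume "a \<le> b"
  then have "[a..<Suc b] = a # [Suc a..<Suc b]" by (intro upt_conv_Cons) simp
  then show ?thesis unfolding mprod_def by (simp only: foldr.simps o_apply)
qed

lemma mprod_empty: "b < a \<Longrightarrow> mprod G a b = mat 1"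
  unfolding mprod_def by simp

locale gam =
  fixes G :: "nat \<Rightarrow> real^'n^'n" and L :: nat
  assumes G_ns: "\<forall>i\<in>{1..L}. nonsingular_int (G i)"
    and G_comm: "\<forall>i\<in>{1..L}. \<forall>j\<in>{1..L}. G i ** G j = G j ** G i"
    and G_coprime: "\<forall>i\<in>{1..L}. \<forall>j\<in>{1..L}. i \<noteq> j \<longrightarrow> coprime_mat (G i) (G j)"
begin

lemma mprod_ns: "1 \<le> a \<Longrightarrow> int_mat (mprod G a L) \<and> det (mprod G a L) \<noteq> 0"
proof (induction "Suc L - a" arbitrary: a)
  case 0 then show ?case by (simp add: mprod_empty int_mat_1)
next
  case (Suc n)
  then have aL: "a \<le> L" by simp
  have IH: "int_mat (mprod G (Suc a) L) \<and> det (mprod G (Suc a) L) \<noteq> 0"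
    using Suc by simp
  have "nonsingular_int (G a)" using G_ns aL Suc.prems by simp
  then show ?case using IH mprod_step[OF aL, of G]
    by (simp add: nonsingular_int_def int_mat_mult det_mul)
qed

lemma mprod_comm: "j \<in> {1..L} \<Longrightarrow> 1 \<le> a \<Longrightarrow> G j ** mprod G a L = mprod G a L ** G j"
proof (induction "Suc L - a" arbitrary: a)
  case 0 then show ?case by (simp add: mprod_empty)
next
  case (Suc n)
  then have aL: "a \<le> L" by simp
  have IH: "G j ** mprod G (Suc a) L = mprod G (Suc a) L ** G j" using Suc by simp
  have c: "G j ** G a = G a ** G j" using G_comm Suc.prems aL by simp
  have "G j ** mprod G a L = (G j ** G a) ** mprod G (Suc a) L"
    using mprod_step[OF aL, of G] by (simp add: matrix_mul_assoc)
  also have "\<dots> = G a ** (G j ** mprod G (Suc a) L)" by (simp add: c matrix_mul_assoc)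
  also have "\<dots> = (G a ** mprod G (Suc a) L) ** G j" by (simp add: IH matrix_mul_assoc)
  finally show ?case using mprod_step[OF aL, of G] by simp
qed

lemma mprod_sumcond: "j \<in> {1..L} \<Longrightarrow> j < a \<Longrightarrow> sumcond (G j) (mprod G a L)"
proof (induction "Suc L - a" arbitrary: a)
  case 0 then show ?case by (simp add: mprod_empty sumcond_1)
next
  case (Suc n)
  then have aL: "a \<le> L" by simp
  have IH: "sumcond (G j) (mprod G (Suc a) L)" using Suc by simp
  have a1: "a \<in> {1..L}" using aL Suc.prems by simp
  have nsj: "nonsingular_int (G j)" and nsa: "nonsingular_int (G a)" using G_ns Suc.prems a1 by auto
  have "coprime_mat (G j) (G a)" using G_coprime Suc.prems a1 by auto
  then have s1: "sumcond (G j) (G a)" using nsj nsa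
    by (intro coprime_sumcond) (auto simp: nonsingular_int_def)
  have c: "G j ** G a = G a ** G j" using G_comm Suc.prems a1 by simp
  have "sumcond (G j) (G a ** mprod G (Suc a) L)"
    using sumcond_prod[OF s1 IH c] nsa by (simp add: nonsingular_int_def)
  then show ?case using mprod_step[OF aL, of G] by simp
qed

lemma mprod_inter:
  "1 \<le> a \<Longrightarrow> int_vec y \<Longrightarrow> (\<forall>i\<in>{a..L}. y \<in> LAT (G i)) \<Longrightarrow> y \<in> LAT (mprod G a L)"
proof (induction "Suc L - a" arbitrary: a)
  case 0 then show ?case by (simp add: mprod_empty LAT_mat1)
next
  case (Suc n)
  then have aL: "a \<le> L" by simp
  have IH: "y \<in> LAT (mprod G (Suc a) L)" using Suc by simp
  have a1: "a \<in> {1..L}" using aL Suc.prems by simp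
  have nsa: "nonsingular_int (G a)" using G_ns a1 by auto
  have P: "int_mat (mprod G (Suc a) L)" "det (mprod G (Suc a) L) \<noteq> 0" using mprod_ns[of "Suc a"] by auto
  have c: "G a ** mprod G (Suc a) L = mprod G (Suc a) L ** G a" using mprod_comm[OF a1] by simp
  have sc: "sumcond (G a) (mprod G (Suc a) L)" using mprod_sumcond[OF a1] by simp
  have ya: "y \<in> LAT (G a)" using Suc.prems aL by simp
  have "y \<in> LAT (G a ** mprod G (Suc a) L)"
    using inter_prod[OF _ _ P c sc ya IH] nsa by (simp add: nonsingular_int_def)
  then show ?case using mprod_step[OF aL, of G] by simp
qed

end



context
  fixes nrm :: "real^'n \<Rightarrow> real"
  assumes N: "is_norm nrm"
begin

lemma nrm_0: "nrm 0 = 0" using N unfolding is_norm_def by blast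
lemma nrm_eq0: "nrm x = 0 \<longleftrightarrow> x = 0" using N unfolding is_norm_def by blast
lemma nrm_scale: "nrm (c *\<^sub>R x) = \<bar>c\<bar> * nrm x" using N unfolding is_norm_def by blast
lemma nrm_tri: "nrm (x + y) \<le> nrm x + nrm y" using N unfolding is_norm_def by blast
lemma nrm_minus: "nrm (- x) = nrm x" using nrm_scale[of "-1" x] by simp
lemma nrm_nonneg: "0 \<le> nrm x"
proof -
  have "0 = nrm (x + - x)" using nrm_0 by simp
  also have "\<dots> \<le> nrm x + nrm (-x)" by (rule nrm_tri)
  finally show ?thesis using nrm_minus by simp
qed
lemma nrm_diff: "nrm (x - y) \<le> nrm x + nrm y"
  using nrm_tri[of x "-y"] nrm_minus[of y] by simp
lemma nrm_sum: "finite I \<Longrightarrow> nrm (sum f I) \<le> (\<Sum>i\<in>I. nrm (f i))"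
proof (induction I rule: finite_induct)
  case empty then show ?case using nrm_0 by simp
next
  case (insert i I)
  then show ?case using nrm_tri[of "f i" "sum f I"] by simp
qed
lemma nrm_rev: "\<bar>nrm x - nrm y\<bar> \<le> nrm (x - y)"
proof -
  have "nrm x \<le> nrm (x - y) + nrm y" using nrm_tri[of "x - y" y] by simp
  moreover have "nrm y \<le> nrm (x - y) + nrm x" using nrm_tri[of "y - x" x] nrm_minus[of "x - y"] by simp
  ultimately show ?thesis by linarith
qed

lemma nrm_upper: "\<exists>C>0. \<forall>x. nrm x \<le> C * norm x"
proof (intro exI conjI allI)
  define C where "C = (\<Sum>i\<in>UNIV. nrm (axis i (1::real))) + 1"
  show "C > 0" unfolding C_def using nrm_nonneg by (smt (verit) sum_nonneg)
  fix x :: "real^'n"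
  have e: "(\<Sum>i\<in>UNIV. x$i *\<^sub>R axis i 1) = x" using basis_expansion[of x] by (simp add: scalar_mult_eq_scaleR)
  have "nrm (\<Sum>i\<in>UNIV. x$i *\<^sub>R axis i 1) \<le> (\<Sum>i\<in>UNIV. nrm (x$i *\<^sub>R axis i 1))" by (rule nrm_sum) simp
  then have "nrm x \<le> (\<Sum>i\<in>UNIV. nrm (x$i *\<^sub>R axis i 1))" by (simp only: e)
  also have "\<dots> = (\<Sum>i\<in>UNIV. \<bar>x$i\<bar> * nrm (axis i 1))" by (simp add: nrm_scale)
  also have "\<dots> \<le> (\<Sum>i\<in>UNIV. norm x * nrm (axis i 1))"
    by (intro sum_mono mult_right_mono component_le_norm_cart nrm_nonneg)
  also have "\<dots> \<le> C * norm x" unfolding C_def by (simp add: sum_distrib_left[symmetric] algebra_simps)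
  finally show "nrm x \<le> C * norm x" .
qed

lemma nrm_lower: "\<exists>c>0. \<forall>x. c * norm x \<le> nrm x"
proof -
  obtain C where C: "C > 0" "\<forall>x. nrm x \<le> C * norm x" using nrm_upper by blast
  have cont: "continuous_on UNIV nrm"
  proof (rule continuous_onI)
    fix x :: "real^'n" and e :: real assume "e > 0"
    show "\<exists>d>0. \<forall>x'\<in>UNIV. dist x' x < d \<longrightarrow> dist (nrm x') (nrm x) \<le> e"
    proof (intro exI[of _ "e / C"] conjI ballI impI)
      show "e / C > 0" using \<open>e > 0\<close> C by simp
      fix x' :: "real^'n" assume "dist x' x < e / C"
      then have "C * norm (x' - x) \<le> e" using C by (simp add: dist_norm field_simps)
      moreover have "\<bar>nrm x' - nrm x\<bar> \<le> C * norm (x' - x)" using nrm_rev C(2) by (metis order_trans)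
      ultimately show "dist (nrm x') (nrm x) \<le> e" by (simp add: dist_real_def)
    qed
  qed
  have ne: "sphere (0::real^'n) 1 \<noteq> {}"
  proof -
    obtain i :: 'n where True by blast
    have "axis i (1::real) \<in> sphere 0 1" by simp
    then show ?thesis by blast
  qed
  obtain x0 where x0: "x0 \<in> sphere 0 1" "\<forall>y\<in>sphere 0 1. nrm x0 \<le> nrm y"
    using continuous_attains_inf[OF compact_sphere ne continuous_on_subset[OF cont]] by blast
  have c0: "nrm x0 > 0" using x0(1) nrm_nonneg[of x0] nrm_eq0[of x0] by force
  show ?thesis
  proof (intro exI[of _ "nrm x0"] conjI allI)
    show "nrm x0 > 0" by fact
    fix x :: "real^'n"
    show "nrm x0 * norm x \<le> nrm x"
    proof (cases "x = 0")
      case True then show ?thesis by (simp add: nrm_0)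
    next
      case False
      then have "(1 / norm x) *\<^sub>R x \<in> sphere 0 1" by simp
      then have "nrm x0 \<le> nrm ((1 / norm x) *\<^sub>R x)" using x0 by blast
      also have "\<dots> = nrm x / norm x" by (simp add: nrm_scale)
      finally show ?thesis using False by (simp add: field_simps)
    qed
  qed
qed

lemma opnorm_bound: "nrm (U *v x) \<le> opnorm nrm U * nrm x" and opnorm_nonneg: "0 \<le> opnorm nrm U"
proof -
  obtain C where C: "C > 0" "\<forall>x. nrm x \<le> C * norm x" using nrm_upper by blast
  obtain c where c: "c > 0" "\<forall>x. c * norm x \<le> nrm x" using nrm_lower by blast
  obtain K where K: "K > 0" "\<forall>x. norm (U *v x) \<le> norm x * K"
    using bounded_linear.pos_bounded[OF matrix_vector_mul_bounded_linear[of U]] by blast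
  have bd: "nrm (U *v y) \<le> C * K / c" if "nrm y = 1" for y
  proof -
    have "norm y \<le> 1 / c" using c that by (simp add: field_simps) (metis mult.commute)
    have "nrm (U *v y) \<le> C * norm (U *v y)" using C by blast
    also have "\<dots> \<le> C * (norm y * K)" using K C by (simp add: mult_left_mono)
    also have "\<dots> \<le> C * ((1 / c) * K)" using \<open>norm y \<le> 1 / c\<close> C K
      by (intro mult_left_mono mult_right_mono) simp_all
    finally show ?thesis by simp
  qed
  have bdd: "bdd_above ((\<lambda>x. nrm (U *v x)) ` {x. nrm x = 1})"
    using bd by (intro bdd_aboveI[of _ "C * K / c"]) auto
  have up: "nrm (U *v y) \<le> opnorm nrm U" if "nrm y = 1" for y
    unfolding opnorm_def using that by (intro cSUP_upper[OF _ bdd]) simp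
  obtain i :: 'n where True by blast
  have "nrm (axis i (1::real)) \<noteq> 0" using nrm_eq0 by (simp add: axis_eq_0_iff)
  then have "nrm ((1 / nrm (axis i 1)) *\<^sub>R axis i (1::real)) = 1" using nrm_nonneg by (simp add: nrm_scale)
  from up[OF this] show "0 \<le> opnorm nrm U" using nrm_nonneg order_trans by blast
  show "nrm (U *v x) \<le> opnorm nrm U * nrm x"
  proof (cases "x = 0")
    case True then show ?thesis by (simp add: nrm_0)
  next
    case False
    then have p: "nrm x > 0" using nrm_eq0 nrm_nonneg by (metis order_le_less)
    then have "nrm ((1 / nrm x) *\<^sub>R x) = 1" by (simp add: nrm_scale)
    then have "nrm (U *v ((1 / nrm x) *\<^sub>R x)) \<le> opnorm nrm U" by (rule up)
    then have "nrm (U *v x) / nrm x \<le> opnorm nrm U" using p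
      by (simp add: nrm_scale matrix_vector_mult_scaleR)
    then show ?thesis using p by (simp add: divide_le_eq mult.commute)
  qed
qed

lemma lat_min_le:
  assumes "v \<in> LAT Lam" "v \<noteq> 0"
  shows "lat_min nrm Lam \<le> nrm v"
  unfolding lat_min_def using assms nrm_nonneg
  by (intro cInf_lower) (auto intro: bdd_belowI[of _ 0])

end



lemma Q_zero:
  assumes N: "is_norm nrm" and Q: "closest_point_map nrm Lam Q"
    and w: "nrm w < lat_min nrm Lam / 2"
  shows "Q w = 0"
proof (rule ccontr)
  assume ne: "Q w \<noteq> 0"
  have QL: "Q w \<in> LAT Lam" and cl: "nrm (Q w - w) \<le> nrm (0 - w)"
    using Q LAT_0 unfolding closest_point_map_def by blast+
  have "nrm (Q w) = nrm ((Q w - w) + w)" by simp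
  also have "\<dots> \<le> nrm (Q w - w) + nrm w" by (rule nrm_tri[OF N])
  also have "\<dots> \<le> 2 * nrm w" using cl nrm_minus[OF N, of w] by simp
  finally have "nrm (Q w) < lat_min nrm Lam" using w by simp
  moreover have "lat_min nrm Lam \<le> nrm (Q w)" by (rule lat_min_le[OF N QL ne])
  ultimately show False by simp
qed

lemma avg_bound:
  fixes L :: nat
  assumes N: "is_norm nrm" and L: "L \<ge> 1"
    and e: "\<forall>i\<in>{1..L}. x i = m + d i" and b: "\<forall>i\<in>{1..L}. nrm (d i) \<le> \<tau>"
  shows "nrm ((1 / real L) *\<^sub>R (\<Sum>i=1..L. x i) - m) \<le> \<tau>"
proof -
  have "(\<Sum>i=1..L. x i) = (\<Sum>i=1..L. m + d i)" using e by (intro sum.cong) auto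
  also have "\<dots> = real L *\<^sub>R m + (\<Sum>i=1..L. d i)"
    by (simp only: sum.distrib sum_constant_scaleR card_atLeastAtMost) simp
  finally have s: "(1 / real L) *\<^sub>R (\<Sum>i=1..L. x i) - m = (1 / real L) *\<^sub>R (\<Sum>i=1..L. d i)"
    using L by (simp add: scaleR_add_right)
  have "nrm ((1 / real L) *\<^sub>R (\<Sum>i=1..L. d i)) = (1 / real L) * nrm (\<Sum>i=1..L. d i)"
    by (simp add: nrm_scale[OF N])
  also have "\<dots> \<le> (1 / real L) * (\<Sum>i=1..L. nrm (d i))"
    by (intro mult_left_mono nrm_sum[OF N]) simp_all
  also have "\<dots> \<le> (1 / real L) * (\<Sum>i=1..L. \<tau>)"
    using b by (intro mult_left_mono sum_mono) auto
  also have "\<dots> = \<tau>" using L by simp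
  finally show ?thesis using s by simp
qed

lemma tau_part:
  fixes L :: nat
  assumes N: "is_norm nrm" and L: "L \<ge> 2"
    and b: "\<forall>i\<in>{1..L}. nrm (dr i) \<le> \<tau>" and t: "\<tau> < lat_min nrm Lam / (4 * opnorm nrm U)"
  shows "\<forall>i\<in>{2..L}. nrm (U *v (dr i - dr 1)) < lat_min nrm Lam / 2"
proof
  fix i assume i: "i \<in> {2..L}"
  have "nrm (dr 1) \<le> \<tau>" using b L by simp
  then have t0: "0 \<le> \<tau>" using nrm_nonneg[OF N, of "dr 1"] by linarith
  have o0: "0 \<le> opnorm nrm U" by (rule opnorm_nonneg[OF N])
  have "opnorm nrm U \<noteq> 0"
  proof
    assume "opnorm nrm U = 0"
    then show False using t t0 by simp
  qed
  then have op: "0 < opnorm nrm U" using o0 by simp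
  have "nrm (U *v (dr i - dr 1)) \<le> opnorm nrm U * nrm (dr i - dr 1)" by (rule opnorm_bound[OF N])
  also have "\<dots> \<le> opnorm nrm U * (2 * \<tau>)"
  proof (rule mult_left_mono[OF _ o0])
    have "nrm (dr i - dr 1) \<le> nrm (dr i) + nrm (dr 1)" by (rule nrm_diff[OF N])
    also have "\<dots> \<le> 2 * \<tau>"
    proof -
      have "nrm (dr i) \<le> \<tau>" "nrm (dr 1) \<le> \<tau>" using b i L by auto
      then show ?thesis by linarith
    qed
    finally show "nrm (dr i - dr 1) \<le> 2 * \<tau>" .
  qed
  also have "\<dots> < lat_min nrm Lam / 2" using t op by (simp add: field_simps)
  finally show "nrm (U *v (dr i - dr 1)) < lat_min nrm Lam / 2" .
qed



theorem theorem4: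
  fixes M U V Lam U1 :: "real^'n^'n"
    and G :: "nat \<Rightarrow> real^'n^'n"
    and L :: nat
    and nrm :: "real^'n \<Rightarrow> real"
    and Q :: "real^'n \<Rightarrow> real^'n"
    and m :: "real^'n"
    and r n dr :: "nat \<Rightarrow> real^'n"
  assumes L2: "L \<ge> 2"
    and M_ns: "nonsingular_int M"
    and G_ns: "\<forall>i\<in>{1..L}. nonsingular_int (G i)"
    and G_comm: "\<forall>i\<in>{1..L}. \<forall>j\<in>{1..L}. G i ** G j = G j ** G i"
    and G_coprime: "\<forall>i\<in>{1..L}. \<forall>j\<in>{1..L}. i \<noteq> j \<longrightarrow> coprime_mat (G i) (G j)"
    and snf: "unimodular U" "unimodular V" "int_mat Lam" "is_diag Lam" "U ** M ** V = Lam"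
    and U1: "unimodular U1"
    and nrm: "is_norm nrm"
    and Q: "closest_point_map nrm Lam Q"
    and m: "m \<in> A1 M G L U1"
    and r: "\<forall>i\<in>{1..L}. r i = rem (M ** G i) m"
    and n: "\<forall>i\<in>{1..L}. m = (M ** G i) *v n i + r i"
    and dr: "\<forall>i\<in>{1..L}. int_vec (r i + dr i)"
  shows
    "((\<forall>i\<in>{1..L}. alg2 Q U V Lam G L U1 (\<lambda>i. r i + dr i) i = n i)
        \<longleftrightarrow> (\<forall>i\<in>{2..L}. Q (U *v (dr i - dr 1)) = 0))
     \<and> ((\<forall>i\<in>{2..L}. nrm (U *v (dr i - dr 1)) < lat_min nrm Lam / 2)
        \<longrightarrow> (\<forall>i\<in>{2..L}. Q (U *v (dr i - dr 1)) = 0))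
     \<and> (\<forall>\<tau>::real. (\<forall>i\<in>{1..L}. nrm (dr i) \<le> \<tau>) \<and> \<tau> < lat_min nrm Lam / (4 * opnorm nrm U)
        \<longrightarrow> (\<forall>i\<in>{2..L}. Q (U *v (dr i - dr 1)) = 0))
     \<and> (\<forall>\<tau>::real. (\<forall>i\<in>{1..L}. nrm (dr i) \<le> \<tau>)
        \<longrightarrow> nrm ((1 / real L) *\<^sub>R (\<Sum>i=1..L. (M ** G i) *v n i + (r i + dr i)) - m) \<le> \<tau>)"
proof -
  interpret g: gam G L using G_ns G_comm G_coprime by unfold_locales
  have L1: "1 \<in> {1..L}" using L2 by simp
  have iM: "int_mat M" and dM: "det M \<noteq> 0" using M_ns unfolding nonsingular_int_def by auto
  have iG: "int_mat (G i)" and dG: "det (G i) \<noteq> 0" if "i \<in> {1..L}" for i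
    using G_ns that unfolding nonsingular_int_def by auto
  have iMG: "int_mat (M ** G i)" and dMG: "det (M ** G i) \<noteq> 0" if "i \<in> {1..L}" for i
    using iG[OF that] dG[OF that] iM dM by (auto simp: int_mat_mult det_mul)
  have iU: "int_mat U" and dU: "det U \<noteq> 0" using snf(1) unfolding unimodular_def by auto
  have iV: "int_mat V" and dV: "det V \<noteq> 0" using snf(2) unfolding unimodular_def by auto
  define Vi where "Vi = matrix_inv V"
  have iVi: "int_mat Vi" unfolding Vi_def by (rule unimod_inv_mat[OF snf(2)])
  have dVi: "det Vi \<noteq> 0" unfolding Vi_def by (rule det_inv_nz[OF dV])
  have VVi: "V *v (Vi *v x) = x" "Vi *v (V *v x) = x" for x unfolding Vi_def using inv_vec[OF dV] by auto
  have VVim: "V ** Vi = mat 1" unfolding Vi_def by (rule inv_props(1)[OF dV])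
  have "det Lam = det U * det M * det V" unfolding snf(5)[symmetric] by (simp add: det_mul)
  then have dLam: "det Lam \<noteq> 0" using dU dM dV by simp
  define Li where "Li = matrix_inv Lam"
  have LLi: "Lam *v (Li *v x) = x" "Li *v (Lam *v x) = x" for x unfolding Li_def using inv_vec[OF dLam] by auto
  have im: "int_vec m" using m unfolding A1_def by auto
  have rN: "r i \<in> NN (M ** G i)" and rL: "m - r i \<in> LAT (M ** G i)" if "i \<in> {1..L}" for i
    using rem_props[OF iMG[OF that] dMG[OF that] im] r that by auto
  have ir: "int_vec (r i)" if "i \<in> {1..L}" for i using NN_int[OF rN[OF that]] .
  have inn: "int_vec (n i)" if i: "i \<in> {1..L}" for i
  proof -
    obtain k where k: "int_vec k" "m - r i = (M ** G i) *v k" using rL[OF i] by (auto elim: LAT_E)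
    have "m = (M ** G i) *v n i + r i" using n i by blast
    then have "(M ** G i) *v n i = (M ** G i) *v k" using k(2) by simp
    then have "n i = k" by (rule mv_cancel[OF dMG[OF i]])
    then show ?thesis using k by simp
  qed
  define z where "z i = G 1 *v n 1 - G i *v n i" for i
  have iz: "int_vec (z i)" if i: "i \<in> {1..L}" for i
    unfolding z_def using inn[OF i] inn[OF L1] iG[OF i] iG[OF L1] by (intro int_vec_diff int_vec_mult)
  have Ur: "U *v (r i - r 1) = Lam *v (Vi *v z i)" if i: "i \<in> {1..L}" for i
  proof -
    have e1: "m = (M ** G i) *v n i + r i" and e2: "m = (M ** G 1) *v n 1 + r 1" using n i L1 by blast+
    have "r i = m - (M ** G i) *v n i" using e1 by simp
    moreover have "r 1 = m - (M ** G 1) *v n 1" using e2 by simp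
    ultimately have "r i - r 1 = (M ** G 1) *v n 1 - (M ** G i) *v n i" by simp
    also have "\<dots> = M *v z i" unfolding z_def by (simp add: matrix_vector_mult_diff_distrib matrix_vector_mul_assoc)
    finally have e: "r i - r 1 = M *v z i" .
    have "Lam *v (Vi *v z i) = (U ** M ** V ** Vi) *v z i" using snf(5) by (simp add: matrix_vector_mul_assoc)
    also have "\<dots> = (U ** M) *v z i" using VVim by (simp add: matrix_mul_assoc[symmetric])
    finally show ?thesis using e by (simp add: matrix_vector_mul_assoc)
  qed
  define rt where "rt i = r i + dr i" for i
  define p where "p i = Q (U *v (rt i - rt 1))" for i
  define th where "th i = Q (U *v (dr i - dr 1))" for i
  have Qeq: "Q (w + l) = Q w + l" if "l \<in> LAT Lam" for w l using Q that unfolding closest_point_map_def by blast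
  have pe: "p i = th i + Lam *v (Vi *v z i)" if i: "i \<in> {1..L}" for i
  proof -
    have "U *v (rt i - rt 1) = U *v (dr i - dr 1) + U *v (r i - r 1)"
    proof -
      have "rt i - rt 1 = (dr i - dr 1) + (r i - r 1)" unfolding rt_def by simp
      then show ?thesis by (simp only: matrix_vector_right_distrib)
    qed
    then show ?thesis unfolding p_def th_def using Ur[OF i] Qeq LAT_I[OF int_vec_mult[OF iVi iz[OF i]]] by simp
  qed
  have Lp: "Li *v p i = Li *v th i + Vi *v z i" if i: "i \<in> {1..L}" for i
    using pe[OF i] LLi by (simp add: matrix_vector_right_distrib)
  define w where "w i = rem (Vi ** G i) (Li *v p i)" for i
  define Pp where "Pp psi \<longleftrightarrow> psi \<in> NN (Vi ** mprod G 1 L ** U1) \<and> congmod psi 0 (Vi ** G 1)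
                   \<and> (\<forall>i\<in>{2..L}. congmod psi (w i) (Vi ** G i))" for psi
  define psi where "psi = (THE psi. Pp psi)"
  have alg: "alg2 Q U V Lam G L U1 rt i = (if i = 1 then matrix_inv (G 1) *v (V *v psi)
             else matrix_inv (G i) *v (V *v (psi - Li *v p i)))" for i
    unfolding alg2_def Let_def psi_def Pp_def w_def p_def Li_def Vi_def ..
  have rt_eq: "(\<lambda>i. r i + dr i) = rt" unfolding rt_def ..
  have part1: "(\<forall>i\<in>{1..L}. alg2 Q U V Lam G L U1 rt i = n i) \<longleftrightarrow> (\<forall>i\<in>{2..L}. th i = 0)"
  proof
    assume A: "\<forall>i\<in>{1..L}. alg2 Q U V Lam G L U1 rt i = n i"
    show "\<forall>i\<in>{2..L}. th i = 0"
    proof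
      fix i assume i2: "i \<in> {2..L}"
      then have i: "i \<in> {1..L}" and i1: "i \<noteq> 1" by auto
      have "matrix_inv (G 1) *v (V *v psi) = n 1" using A L1 alg[of 1] by simp
      then have "G 1 *v (matrix_inv (G 1) *v (V *v psi)) = G 1 *v n 1" by simp
      then have e1: "V *v psi = G 1 *v n 1" by (simp only: inv_vec(1)[OF dG[OF L1]])
      have "matrix_inv (G i) *v (V *v (psi - Li *v p i)) = n i" using A i i1 alg[of i] by simp
      then have "G i *v (matrix_inv (G i) *v (V *v (psi - Li *v p i))) = G i *v n i" by simp
      then have ei: "V *v (psi - Li *v p i) = G i *v n i" by (simp only: inv_vec(1)[OF dG[OF i]])
      have h: "G 1 *v n 1 - V *v (Li *v p i) = G i *v n i" using e1 ei
        by (simp add: matrix_vector_mult_diff_distrib)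
      have "V *v (Li *v p i) = z i" unfolding z_def using h[symmetric] by simp
      then have "Vi *v (V *v (Li *v p i)) = Vi *v z i" by simp
      then have "Li *v p i = Vi *v z i" by (simp only: VVi)
      then have "Li *v th i = 0" using Lp[OF i] by simp
      then show "th i = 0" using LLi[of "th i"] by simp
    qed
  next
    assume B: "\<forall>i\<in>{2..L}. th i = 0"
    have Lpz: "Li *v p i = Vi *v z i" if "i \<in> {2..L}" for i
      using Lp[of i] B that by (simp add: LLi)
    define psi0 where "psi0 = Vi *v (G 1 *v n 1)"
    have ipsi0: "int_vec psi0" unfolding psi0_def using iVi iG[OF L1] inn[OF L1] by (intro int_vec_mult)
    have P1: "mprod G 1 L = G 1 ** mprod G 2 L" using mprod_step[of 1 L G] L2 by (simp add: numeral_2_eq_2)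
    have iP1: "int_mat (mprod G 1 L)" and dP1: "det (mprod G 1 L) \<noteq> 0" using g.mprod_ns[of 1] by auto
    have iU1: "int_mat U1" and dU1: "det U1 \<noteq> 0" using U1 unfolding unimodular_def by auto
    define BB where "BB = Vi ** mprod G 1 L ** U1"
    have iBB: "int_mat BB" unfolding BB_def using iVi iP1 iU1 by (intro int_mat_mult)
    have dBB: "det BB \<noteq> 0" unfolding BB_def using dVi dP1 dU1 by (simp add: det_mul)
    have iVG: "int_mat (Vi ** G i)" and dVG: "det (Vi ** G i) \<noteq> 0" if "i \<in> {1..L}" for i
      using iVi iG[OF that] dVi dG[OF that] by (auto simp: int_mat_mult det_mul)
    have n1N: "n 1 \<in> NN (mprod G 2 L ** U1)"
    proof -
      obtain x1 where x1: "\<forall>j. 0 \<le> x1$j \<and> x1$j < 1" "r 1 = (M ** G 1) *v x1"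
        using rN[OF L1] unfolding NN_def by auto
      have "m = (M ** G 1) *v n 1 + (M ** G 1) *v x1" using bspec[OF n L1] x1(2) by simp
      then have "matrix_inv (M ** G 1) *v m = n 1 + x1"
        using inv_vec(2)[OF dMG[OF L1]] by (simp add: matrix_vector_right_distrib)
      moreover have "vfloor (n 1 + x1) = n 1"
      proof -
        have "of_int \<lfloor>n 1 $ j + x1 $ j\<rfloor> = n 1 $ j" for j
        proof -
          obtain a where a: "n 1 $ j = of_int a" using inn[OF L1] unfolding int_vec_def by (metis Ints_cases)
          have "\<lfloor>n 1 $ j + x1 $ j\<rfloor> = a" unfolding a using x1(1)[rule_format, of j]
            by (intro floor_unique) auto
          then show ?thesis using a by simp
        qed
        then show ?thesis unfolding vfloor_def by (simp add: vec_eq_iff)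
      qed
      ultimately show ?thesis using m unfolding A1_def by simp
    qed
    have Ppsi0: "Pp psi0" unfolding Pp_def
    proof (intro conjI ballI)
      obtain x where x: "\<forall>j. 0 \<le> x$j \<and> x$j < 1" "n 1 = (mprod G 2 L ** U1) *v x"
        using n1N unfolding NN_def by auto
      have "psi0 = BB *v x" unfolding psi0_def BB_def P1 x(2)
        by (simp add: matrix_vector_mul_assoc matrix_mul_assoc)
      then show "psi0 \<in> NN (Vi ** mprod G 1 L ** U1)" unfolding NN_def BB_def[symmetric]
        using ipsi0 x(1) by blast
      show "congmod psi0 0 (Vi ** G 1)" unfolding congmod_def psi0_def
        using LAT_I[OF inn[OF L1], of "Vi ** G 1"] by (simp add: matrix_vector_mul_assoc)
    next
      fix i assume i2: "i \<in> {2..L}"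
      then have i: "i \<in> {1..L}" by auto
      have wi: "w i = rem (Vi ** G i) (Vi *v z i)" unfolding w_def using Lpz[OF i2] by simp
      have l1: "Vi *v z i - w i \<in> LAT (Vi ** G i)" unfolding wi
        by (rule rem_props(2)[OF iVG[OF i] dVG[OF i] int_vec_mult[OF iVi iz[OF i]]])
      have "psi0 - Vi *v z i = (Vi ** G i) *v n i" unfolding psi0_def z_def
        by (simp add: matrix_vector_mult_diff_distrib matrix_vector_mul_assoc)
      then have l2: "psi0 - Vi *v z i \<in> LAT (Vi ** G i)" using LAT_I[OF inn[OF i]] by simp
      have "psi0 - w i = (psi0 - Vi *v z i) + (Vi *v z i - w i)" by simp
      then show "congmod psi0 (w i) (Vi ** G i)" unfolding congmod_def using LAT_add[OF l2 l1] by simp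
    qed
    have uniq: "psi' = psi0" if Pp': "Pp psi'" for psi'
    proof -
      define d where "d = psi' - psi0"
      have dL: "d \<in> LAT (Vi ** G i)" if i: "i \<in> {1..L}" for i
      proof (cases "i = 1")
        case True
        have "psi' - 0 \<in> LAT (Vi ** G 1)" "psi0 - 0 \<in> LAT (Vi ** G 1)"
          using Pp' Ppsi0 unfolding Pp_def congmod_def by auto
        then have "(psi' - 0) - (psi0 - 0) \<in> LAT (Vi ** G 1)" by (rule LAT_diff)
        then show ?thesis unfolding d_def True by simp
      next
        case False
        then have i2: "i \<in> {2..L}" using i by auto
        have "psi' - w i \<in> LAT (Vi ** G i)" "psi0 - w i \<in> LAT (Vi ** G i)"
          using Pp' Ppsi0 i2 unfolding Pp_def congmod_def by auto
        then have "(psi' - w i) - (psi0 - w i) \<in> LAT (Vi ** G i)" by (rule LAT_diff)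
        then show ?thesis unfolding d_def by simp
      qed
      have Vd: "V *v d \<in> LAT (G i)" if i: "i \<in> {1..L}" for i
      proof -
        obtain k where k: "int_vec k" "d = (Vi ** G i) *v k" using dL[OF i] by (auto elim: LAT_E)
        then have "V *v d = G i *v k" using VVi by (simp add: matrix_vector_mul_assoc[symmetric])
        then show ?thesis using LAT_I[OF k(1)] by simp
      qed
      have psi'N: "psi' \<in> NN BB" using Pp' unfolding Pp_def BB_def by simp
      have psi0N: "psi0 \<in> NN BB" using Ppsi0 unfolding Pp_def BB_def by simp
      have id: "int_vec d" unfolding d_def using NN_int[OF psi'N] ipsi0 by (rule int_vec_diff)
      have "V *v d \<in> LAT (mprod G 1 L)"
        using g.mprod_inter[of 1 "V *v d"] int_vec_mult[OF iV id] Vd by simp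
      then obtain k where k: "int_vec k" "V *v d = mprod G 1 L *v k" by (auto elim: LAT_E)
      have "d = BB *v (matrix_inv U1 *v k)"
      proof -
        have "d = Vi *v (V *v d)" using VVi by simp
        also have "\<dots> = Vi *v (mprod G 1 L *v (U1 *v (matrix_inv U1 *v k)))"
          using k(2) inv_vec(1)[OF dU1] by simp
        also have "\<dots> = BB *v (matrix_inv U1 *v k)" unfolding BB_def by (simp add: matrix_vector_mul_assoc matrix_mul_assoc)
        finally show ?thesis .
      qed
      then have "d \<in> LAT BB" using LAT_I[OF unimod_inv_vec[OF U1 k(1)]] by simp
      then have "psi' - psi0 \<in> LAT BB" unfolding d_def .
      then show ?thesis by (rule NN_unique[OF dBB psi'N psi0N])
    qed
    have psi_eq: "psi = psi0" unfolding psi_def using Ppsi0 uniq by (rule the_equality)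
    show "\<forall>i\<in>{1..L}. alg2 Q U V Lam G L U1 rt i = n i"
    proof
      fix i assume i: "i \<in> {1..L}"
      show "alg2 Q U V Lam G L U1 rt i = n i"
      proof (cases "i = 1")
        case True
        then show ?thesis unfolding alg psi_eq psi0_def using VVi inv_vec(2)[OF dG[OF L1]] by simp
      next
        case False
        then have i2: "i \<in> {2..L}" using i by auto
        have "psi - Li *v p i = Vi *v (G i *v n i)" unfolding psi_eq psi0_def Lpz[OF i2] z_def
          by (simp add: matrix_vector_mult_diff_distrib)
        then show ?thesis unfolding alg using False VVi inv_vec(2)[OF dG[OF i]] by simp
      qed
    qed
  qed
  have part2: "(\<forall>i\<in>{2..L}. nrm (U *v (dr i - dr 1)) < lat_min nrm Lam / 2)
        \<longrightarrow> (\<forall>i\<in>{2..L}. Q (U *v (dr i - dr 1)) = 0)"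
    using Q_zero[OF nrm Q] by blast
  have part3: "\<forall>\<tau>::real. (\<forall>i\<in>{1..L}. nrm (dr i) \<le> \<tau>) \<and> \<tau> < lat_min nrm Lam / (4 * opnorm nrm U)
        \<longrightarrow> (\<forall>i\<in>{2..L}. Q (U *v (dr i - dr 1)) = 0)"
    using tau_part[OF nrm L2] Q_zero[OF nrm Q] by blast
  have part4: "\<forall>\<tau>::real. (\<forall>i\<in>{1..L}. nrm (dr i) \<le> \<tau>)
        \<longrightarrow> nrm ((1 / real L) *\<^sub>R (\<Sum>i=1..L. (M ** G i) *v n i + (r i + dr i)) - m) \<le> \<tau>"
  proof (intro allI impI)
    fix \<tau> :: real assume b: "\<forall>i\<in>{1..L}. nrm (dr i) \<le> \<tau>"
    have e: "\<forall>i\<in>{1..L}. (M ** G i) *v n i + (r i + dr i) = m + dr i" using n by (simp add: add.assoc)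
    show "nrm ((1 / real L) *\<^sub>R (\<Sum>i=1..L. (M ** G i) *v n i + (r i + dr i)) - m) \<le> \<tau>"
      by (rule avg_bound[OF nrm _ e b]) (use L2 in simp)
  qed
  show ?thesis unfolding rt_eq using part1 part2 part3 part4 unfolding th_def by blast
qed


end
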